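(* Let $n\ge0$. Every $f\in Mlt(Q_n)$ has order $1$, $2$ or $4$; in particular $f$ is a product of disjoint $2$-cycles and $4$-cycles.
   Context: Cayley--Dickson loops: $Q_0=\{1,-1\}\subset\mathbb{R}$ with conjugation $x^*=x$. For $n\ge1$, $Q_n=\{(x,0),(x,1)\mid x\in Q_{n-1}\}$ with multiplication $(x,0)(y,0)=(xy,0)$, $(x,0)(y,1)=(yx,1)$, $(x,1)(y,0)=(xy^*,1)$, $(x,1)(y,1)=(-y^*x,0)$ and conjugation $(x,0)^*=(x^*,0)$, $(x,1)^*=(-x,1)$, where $-(x,a)=(-x,a)$. $Q_n$ is a loop with neutral element $1=(1,0,\dots,0)$. For a loop $Q$, $L_x(a)=xa$, $R_x(a)=ax$, $Mlt(Q)=\langle L_x,R_x\mid x\in Q\rangle\le Sym(Q)$. *)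

theory Defs
  imports "HOL-Algebra.Multiplicative_Group" "HOL-Algebra.Bij" "HOL-Algebra.Generated_Groups"
begin

text \<open>Elements of the Cayley--Dickson loops: Base x stands for x in Q_0 (a subset of the
integers, here {1,-1}); Pair x a stands for the pair (x,a) with a bit a (False = 0, True = 1).\<close>

datatype cd = Base int | Pair cd bool

fun cd_neg :: "cd \<Rightarrow> cd" where
  "cd_neg (Base x) = Base (- x)"
| "cd_neg (Pair x a) = Pair (cd_neg x) a"

fun cd_conj :: "cd \<Rightarrow> cd" where
  "cd_conj (Base x) = Base x"
| "cd_conj (Pair x False) = Pair (cd_conj x) False"
| "cd_conj (Pair x True) = Pair (cd_neg x) True"

lemma size_cd_neg [simp]: "size (cd_neg x) = size x"
  by (induction x) auto

lemma size_cd_conj [simp]: "size (cd_conj x) = size x"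
  by (induction x rule: cd_conj.induct) auto

function (sequential) cd_mult :: "cd \<Rightarrow> cd \<Rightarrow> cd" where
  "cd_mult (Base x) (Base y) = Base (x * y)"
| "cd_mult (Pair x False) (Pair y False) = Pair (cd_mult x y) False"
| "cd_mult (Pair x False) (Pair y True) = Pair (cd_mult y x) True"
| "cd_mult (Pair x True) (Pair y False) = Pair (cd_mult x (cd_conj y)) True"
| "cd_mult (Pair x True) (Pair y True) = Pair (cd_neg (cd_mult (cd_conj y) x)) False"
| "cd_mult _ _ = Base 0" \<comment> \<open>arbitrary junk value; never used on elements of the same Q_n\<close>
  by pat_completeness auto
termination
  by (relation "measure (\<lambda>(x, y). size x + size y)") auto

fun Q :: "nat \<Rightarrow> cd set" where
  "Q 0 = {Base 1, Base (-1)}"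
| "Q (Suc n) = {Pair x a | x a. x \<in> Q n}"

definition Lmap :: "nat \<Rightarrow> cd \<Rightarrow> (cd \<Rightarrow> cd)" where
  "Lmap n x = restrict (\<lambda>a. cd_mult x a) (Q n)"

definition Rmap :: "nat \<Rightarrow> cd \<Rightarrow> (cd \<Rightarrow> cd)" where
  "Rmap n x = restrict (\<lambda>a. cd_mult a x) (Q n)"

definition Mlt :: "nat \<Rightarrow> (cd \<Rightarrow> cd) set" where
  "Mlt n = generate (BijGroup (Q n)) (Lmap n ` Q n \<union> Rmap n ` Q n)"

end

theory Submission
  imports Defs
begin
lemma neg_neg[simp]: "cd_neg (cd_neg x) = x"
  by (induction x) auto

lemma conj_conj[simp]: "cd_conj (cd_conj x) = x"
  by (induction x rule: cd_conj.induct) auto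

lemma conj_neg: "cd_conj (cd_neg x) = cd_neg (cd_conj x)"
  by (induction x rule: cd_conj.induct) auto

lemma mult_neg: "cd_mult x (cd_neg y) = cd_neg (cd_mult x y) \<and> cd_mult (cd_neg x) y = cd_neg (cd_mult x y)"
  by (induction x y rule: cd_mult.induct) (auto simp: conj_neg)

lemma mult_neg_right: "cd_mult x (cd_neg y) = cd_neg (cd_mult x y)"
  using mult_neg by blast

lemma mult_neg_left: "cd_mult (cd_neg x) y = cd_neg (cd_mult x y)"
  using mult_neg by blast

fun pos :: "cd \<Rightarrow> cd" where
  "pos (Base x) = Base 1"
| "pos (Pair x a) = Pair (pos x) a"

fun bx :: "cd \<Rightarrow> cd \<Rightarrow> cd" where
  "bx (Pair x a) (Pair y b) = Pair (bx x y) (a \<noteq> b)"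
| "bx _ _ = Base 1"

lemma pos_neg[simp]: "pos (cd_neg x) = pos x"
  by (induction x) auto

lemma pos_conj[simp]: "pos (cd_conj x) = pos x"
  by (induction x rule: cd_conj.induct) auto

lemma bx_comm: "bx x y = bx y x"
  by (induction x y rule: bx.induct) auto

lemma pos_mult: "pos (cd_mult x y) = bx (pos x) (pos y)"
  by (induction x y rule: cd_mult.induct) (auto simp: bx_comm)

lemma bx_assoc: "bx (bx x y) z = bx x (bx y z)"
  apply (induction x y arbitrary: z rule: bx.induct)
  by (case_tac z; auto)+

lemma Q_Suc_iff: "Pair x a \<in> Q (Suc n) \<longleftrightarrow> x \<in> Q n"
  by auto

lemma Q_closed: "x \<in> Q n \<Longrightarrow> cd_neg x \<in> Q n \<and> cd_conj x \<in> Q n \<and> (\<forall>y\<in>Q n. cd_mult x y \<in> Q n \<and> cd_mult y x \<in> Q n)"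
proof (induction n arbitrary: x)
  case 0 then show ?case by auto
next
  case (Suc n)
  then obtain x' a where x: "x = Pair x' a" "x' \<in> Q n" by auto
  show ?case
  proof (intro conjI ballI)
    show "cd_neg x \<in> Q (Suc n)" using x Suc.IH by auto
    show "cd_conj x \<in> Q (Suc n)" using x Suc.IH by (cases a) auto
  next
    fix y assume "y \<in> Q (Suc n)"
    then obtain y' b where y: "y = Pair y' b" "y' \<in> Q n" by auto
    show "cd_mult x y \<in> Q (Suc n)" "cd_mult y x \<in> Q (Suc n)"
      using x y Suc.IH by (cases a; cases b; auto)+
  qed
qed

lemma Q_finite: "finite (Q n)"
proof (induction n)
  case (Suc n)
  have "Q (Suc n) = (\<lambda>(x,a). Pair x a) ` (Q n \<times> UNIV)" by auto
  then show ?case using Suc by simp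
qed auto

lemma neg_inj: "cd_neg x = cd_neg y \<Longrightarrow> x = y"
  by (metis neg_neg)

lemma conj_inj: "cd_conj x = cd_conj y \<Longrightarrow> x = y"
  by (metis conj_conj)

lemma mult_cancel: "x \<in> Q n \<Longrightarrow> a \<in> Q n \<Longrightarrow> b \<in> Q n \<Longrightarrow>
   (cd_mult x a = cd_mult x b \<longrightarrow> a = b) \<and> (cd_mult a x = cd_mult b x \<longrightarrow> a = b)"
proof (induction n arbitrary: x a b)
  case 0 then show ?case by auto
next
  case (Suc n)
  obtain x' c where x: "x = Pair x' c" "x' \<in> Q n" using Suc.prems by auto
  obtain a' d where a: "a = Pair a' d" "a' \<in> Q n" using Suc.prems by auto
  obtain b' e where b: "b = Pair b' e" "b' \<in> Q n" using Suc.prems by auto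
  have cq: "cd_conj a' \<in> Q n" "cd_conj b' \<in> Q n" "cd_conj x' \<in> Q n" using Q_closed a b x by auto
  show ?case using x a b Suc.IH[OF x(2) a(2) b(2)] Suc.IH[OF x(2) cq(1) cq(2)]
     Suc.IH[OF cq(3) a(2) b(2)]
    by (cases c; cases d; cases e) (auto dest: neg_inj conj_inj)
qed

lemma bx_invol: "a \<in> Q n \<Longrightarrow> c \<in> Q n \<Longrightarrow> bx (pos c) (bx (pos c) (pos a)) = pos a"
  by (induction n arbitrary: a c) auto

lemma pos_eq: "a \<in> Q n \<Longrightarrow> b \<in> Q n \<Longrightarrow> pos a = pos b \<Longrightarrow> a = b \<or> a = cd_neg b"
  apply (induction n arbitrary: a b)
   apply auto
  by metis

lemma L_Bij: "x \<in> Q n \<Longrightarrow> Lmap n x \<in> Bij (Q n)"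
proof -
  assume x: "x \<in> Q n"
  have inj: "inj_on (\<lambda>a. cd_mult x a) (Q n)"
  proof (rule inj_onI)
    fix a b assume "a \<in> Q n" "b \<in> Q n" "cd_mult x a = cd_mult x b"
    then show "a = b" using mult_cancel[OF x, of a b] by blast
  qed
  have sub: "(\<lambda>a. cd_mult x a) ` Q n \<subseteq> Q n" using Q_closed[OF x] by blast
  have "(\<lambda>a. cd_mult x a) ` Q n = Q n"
    using endo_inj_surj[OF Q_finite sub inj] .
  then have b: "bij_betw (\<lambda>a. cd_mult x a) (Q n) (Q n)" using inj by (simp add: bij_betw_def)
  have "bij_betw (Lmap n x) (Q n) (Q n)"
    by (rule bij_betw_cong[THEN iffD1, OF _ b]) (simp add: Lmap_def)
  then show ?thesis unfolding Bij_def Lmap_def by simp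
qed

lemma R_Bij: "x \<in> Q n \<Longrightarrow> Rmap n x \<in> Bij (Q n)"
proof -
  assume x: "x \<in> Q n"
  have inj: "inj_on (\<lambda>a. cd_mult a x) (Q n)"
  proof (rule inj_onI)
    fix a b assume "a \<in> Q n" "b \<in> Q n" "cd_mult a x = cd_mult b x"
    then show "a = b" using mult_cancel[OF x, of a b] by blast
  qed
  have sub: "(\<lambda>a. cd_mult a x) ` Q n \<subseteq> Q n" using Q_closed[OF x] by blast
  have "(\<lambda>a. cd_mult a x) ` Q n = Q n"
    using endo_inj_surj[OF Q_finite sub inj] .
  then have b: "bij_betw (\<lambda>a. cd_mult a x) (Q n) (Q n)" using inj by (simp add: bij_betw_def)
  have "bij_betw (Rmap n x) (Q n) (Q n)"
    by (rule bij_betw_cong[THEN iffD1, OF _ b]) (simp add: Rmap_def)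
  then show ?thesis unfolding Bij_def Rmap_def by simp
qed

definition Inv :: "nat \<Rightarrow> (cd \<Rightarrow> cd) \<Rightarrow> bool" where
  "Inv n f \<longleftrightarrow> f \<in> Bij (Q n) \<and> (\<forall>a\<in>Q n. f (cd_neg a) = cd_neg (f a))
     \<and> (\<exists>c\<in>Q n. \<forall>a\<in>Q n. pos (f a) = bx (pos c) (pos a))"

lemma neg_Q: "a \<in> Q n \<Longrightarrow> cd_neg a \<in> Q n"
  using Q_closed by blast

lemma Inv_L: "x \<in> Q n \<Longrightarrow> Inv n (Lmap n x)"
proof -
  assume x: "x \<in> Q n"
  have "\<forall>a\<in>Q n. Lmap n x (cd_neg a) = cd_neg (Lmap n x a)"
    using neg_Q[of _ n] by (simp add: Lmap_def mult_neg_right)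
  moreover have "\<forall>a\<in>Q n. pos (Lmap n x a) = bx (pos x) (pos a)"
    by (simp add: Lmap_def pos_mult)
  ultimately show ?thesis unfolding Inv_def using L_Bij[OF x] x by blast
qed

lemma Inv_R: "x \<in> Q n \<Longrightarrow> Inv n (Rmap n x)"
proof -
  assume x: "x \<in> Q n"
  have "\<forall>a\<in>Q n. Rmap n x (cd_neg a) = cd_neg (Rmap n x a)"
    using neg_Q[of _ n] by (simp add: Rmap_def mult_neg_left)
  moreover have "\<forall>a\<in>Q n. pos (Rmap n x a) = bx (pos x) (pos a)"
    by (simp add: Rmap_def pos_mult bx_comm)
  ultimately show ?thesis unfolding Inv_def using R_Bij[OF x] x by blast
qed

fun onee :: "nat \<Rightarrow> cd" where
  "onee 0 = Base 1" | "onee (Suc n) = Pair (onee n) False"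

lemma onee_Q: "onee n \<in> Q n"
  by (induction n) auto

lemma bx_onee: "a \<in> Q n \<Longrightarrow> bx (pos (onee n)) (pos a) = pos a"
  by (induction n arbitrary: a) auto

lemma Inv_one: "Inv n (\<lambda>a\<in>Q n. a)"
proof -
  have "\<forall>a\<in>Q n. (\<lambda>a\<in>Q n. a) (cd_neg a) = cd_neg ((\<lambda>a\<in>Q n. a) a)"
    using neg_Q[of _ n] by simp
  moreover have "\<forall>a\<in>Q n. pos ((\<lambda>a\<in>Q n. a) a) = bx (pos (onee n)) (pos a)"
    using bx_onee by simp
  ultimately show ?thesis unfolding Inv_def using id_Bij[of "Q n"] onee_Q by blast
qed

lemma Bij_mem: "f \<in> Bij S \<Longrightarrow> a \<in> S \<Longrightarrow> f a \<in> S"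
  using Bij_imp_funcset by blast

lemma Inv_inv: "Inv n f \<Longrightarrow> Inv n (inv\<^bsub>BijGroup (Q n)\<^esub> f)"
proof -
  assume I: "Inv n f"
  then have fB: "f \<in> Bij (Q n)" and fneg: "\<forall>a\<in>Q n. f (cd_neg a) = cd_neg (f a)"
    unfolding Inv_def by auto
  from I obtain c where c: "c \<in> Q n" "\<forall>a\<in>Q n. pos (f a) = bx (pos c) (pos a)"
    unfolding Inv_def by auto
  define g where "g = (\<lambda>x \<in> Q n. (inv_into (Q n) f) x)"
  have ginv: "inv\<^bsub>BijGroup (Q n)\<^esub> f = g" unfolding g_def using inv_BijGroup[OF fB] .
  have gB: "g \<in> Bij (Q n)" unfolding g_def using restrict_inv_into_Bij[OF fB] .
  have bij: "bij_betw f (Q n) (Q n)" using fB unfolding Bij_def by auto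
  have fg: "f (g a) = a" if "a \<in> Q n" for a
    using that bij unfolding g_def by (simp add: bij_betw_def f_inv_into_f)
  have gf: "g (f a) = a" if "a \<in> Q n" for a
  proof -
    have "f a \<in> Q n" using Bij_mem[OF fB that] .
    then show ?thesis using that bij unfolding g_def by (simp add: bij_betw_def inv_into_f_f)
  qed
  have "\<forall>a\<in>Q n. g (cd_neg a) = cd_neg (g a)"
  proof
    fix a assume a: "a \<in> Q n"
    have ga: "g a \<in> Q n" using Bij_mem[OF gB a] .
    have "f (cd_neg (g a)) = cd_neg a" using fneg ga fg[OF a] by simp
    then have "g (f (cd_neg (g a))) = g (cd_neg a)" by simp
    then show "g (cd_neg a) = cd_neg (g a)" using gf[OF neg_Q[OF ga]] by simp
  qed
  moreover have "\<forall>a\<in>Q n. pos (g a) = bx (pos c) (pos a)"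
  proof
    fix a assume a: "a \<in> Q n"
    have ga: "g a \<in> Q n" using Bij_mem[OF gB a] .
    have "pos a = bx (pos c) (pos (g a))" using c(2) ga fg[OF a] by metis
    then show "pos (g a) = bx (pos c) (pos a)" using bx_invol[OF ga c(1)] by simp
  qed
  ultimately show ?thesis unfolding ginv Inv_def using gB c(1) by blast
qed

lemma mult_Bij: "f \<in> Bij S \<Longrightarrow> g \<in> Bij S \<Longrightarrow> f \<otimes>\<^bsub>BijGroup S\<^esub> g = compose S f g"
  by (simp add: BijGroup_def)

lemma Inv_mult: "Inv n f \<Longrightarrow> Inv n g \<Longrightarrow> Inv n (f \<otimes>\<^bsub>BijGroup (Q n)\<^esub> g)"
proof -
  assume If: "Inv n f" and Ig: "Inv n g"
  then have fB: "f \<in> Bij (Q n)" and fneg: "\<forall>a\<in>Q n. f (cd_neg a) = cd_neg (f a)"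
    and gB: "g \<in> Bij (Q n)" and gneg: "\<forall>a\<in>Q n. g (cd_neg a) = cd_neg (g a)"
    unfolding Inv_def by auto
  from If obtain c where c: "c \<in> Q n" "\<forall>a\<in>Q n. pos (f a) = bx (pos c) (pos a)"
    unfolding Inv_def by auto
  from Ig obtain d where d: "d \<in> Q n" "\<forall>a\<in>Q n. pos (g a) = bx (pos d) (pos a)"
    unfolding Inv_def by auto
  have m: "f \<otimes>\<^bsub>BijGroup (Q n)\<^esub> g = compose (Q n) f g" using mult_Bij[OF fB gB] .
  have cB: "compose (Q n) f g \<in> Bij (Q n)" using compose_Bij[OF fB gB] .
  have "\<forall>a\<in>Q n. compose (Q n) f g (cd_neg a) = cd_neg (compose (Q n) f g a)"
  proof
    fix a assume a: "a \<in> Q n"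
    show "compose (Q n) f g (cd_neg a) = cd_neg (compose (Q n) f g a)"
      using a neg_Q[OF a] Bij_mem[OF gB a] fneg gneg by (simp add: compose_def)
  qed
  moreover have "cd_mult c d \<in> Q n" using Q_closed[OF c(1)] d(1) by blast
  moreover have "\<forall>a\<in>Q n. pos (compose (Q n) f g a) = bx (pos (cd_mult c d)) (pos a)"
  proof
    fix a assume a: "a \<in> Q n"
    show "pos (compose (Q n) f g a) = bx (pos (cd_mult c d)) (pos a)"
      using a Bij_mem[OF gB a] c(2) d(2) by (simp add: compose_def pos_mult bx_assoc)
  qed
  ultimately show ?thesis unfolding m Inv_def using cB by blast
qed

lemma Mlt_Inv: "f \<in> Mlt n \<Longrightarrow> Inv n f"
  unfolding Mlt_def
proof (induction rule: generate.induct)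
  case one
  have e: "\<one>\<^bsub>BijGroup (Q n)\<^esub> = (\<lambda>a\<in>Q n. a)" by (simp add: BijGroup_def)
  show ?case using Inv_one[of n] unfolding e .
next
  case (incl h)
  then show ?case using Inv_L Inv_R by blast
next
  case (inv h)
  then show ?case using Inv_L Inv_R Inv_inv by blast
next
  case (eng h1 h2)
  then show ?case using Inv_mult by blast
qed

lemma Inv_four: "Inv n f \<Longrightarrow> a \<in> Q n \<Longrightarrow> f (f (f (f a))) = a"
proof -
  assume I: "Inv n f" and a: "a \<in> Q n"
  then have fB: "f \<in> Bij (Q n)" and fneg: "\<forall>a\<in>Q n. f (cd_neg a) = cd_neg (f a)"
    unfolding Inv_def by auto
  from I obtain c where c: "c \<in> Q n" "\<forall>a\<in>Q n. pos (f a) = bx (pos c) (pos a)"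
    unfolding Inv_def by auto
  have fa: "f a \<in> Q n" using Bij_mem[OF fB a] .
  have ffa: "f (f a) \<in> Q n" using Bij_mem[OF fB fa] .
  have "pos (f (f a)) = pos a" using c(2) fa a bx_invol[OF a c(1)] by simp
  then have "f (f a) = a \<or> f (f a) = cd_neg a" using pos_eq[OF ffa a] by blast
  then show ?thesis
  proof
    assume "f (f a) = a" then show ?thesis by simp
  next
    assume h: "f (f a) = cd_neg a"
    have "f (f (cd_neg a)) = cd_neg (f (f a))" using fneg a fa neg_Q[OF a] by simp
    then show ?thesis using h by simp
  qed
qed

lemma pow_Bij: "f \<in> Bij (Q n) \<Longrightarrow> f [^]\<^bsub>BijGroup (Q n)\<^esub> (k::nat) = (\<lambda>x\<in>Q n. (f ^^ k) x)"
proof (induction k)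
  case 0
  then show ?case by (simp add: BijGroup_def)
next
  case (Suc k)
  have fc: "f \<in> carrier (BijGroup (Q n))" using Suc.prems by (simp add: BijGroup_def)
  have pc: "f [^]\<^bsub>BijGroup (Q n)\<^esub> k \<in> Bij (Q n)"
    using monoid.nat_pow_closed[OF group.is_monoid[OF group_BijGroup] fc] by (simp add: BijGroup_def)
  have "f [^]\<^bsub>BijGroup (Q n)\<^esub> Suc k = f [^]\<^bsub>BijGroup (Q n)\<^esub> k \<otimes>\<^bsub>BijGroup (Q n)\<^esub> f"
    by simp
  also have "\<dots> = compose (Q n) (f [^]\<^bsub>BijGroup (Q n)\<^esub> k) f"
    by (rule mult_Bij[OF pc Suc.prems])
  also have "\<dots> = (\<lambda>x\<in>Q n. (f ^^ Suc k) x)"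
    using Bij_mem[OF Suc.prems] Suc.IH[OF Suc.prems] by (auto simp: compose_def funpow_Suc_right simp del: funpow.simps intro!: restrict_ext)
  finally show ?case .
qed

lemma dvd4: "(d::nat) dvd 4 \<Longrightarrow> d \<in> {1, 2, 4}"
proof -
  assume h: "d dvd 4"
  then have "d \<le> 4" by (rule dvd_imp_le) simp
  then have "d = 0 \<or> d = 1 \<or> d = 2 \<or> d = 3 \<or> d = 4" by arith
  then show ?thesis using h by auto
qed

theorem mainTheorem6:
  fixes n :: nat and f :: "cd \<Rightarrow> cd"
  assumes "f \<in> Mlt n"
  shows "group.ord (BijGroup (Q n)) f \<in> {1, 2, 4}
     \<and> (\<forall>a \<in> Q n. (LEAST k::nat. 0 < k \<and> (f ^^ k) a = a) \<in> {1, 2, 4})"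
proof
  have I: "Inv n f" using Mlt_Inv[OF assms] .
  then have fB: "f \<in> Bij (Q n)" unfolding Inv_def by auto
  have f4: "(f ^^ 4) a = a" if "a \<in> Q n" for a
    using Inv_four[OF I that] by (simp add: numeral_eq_Suc)
  have fc: "f \<in> carrier (BijGroup (Q n))" using fB by (simp add: BijGroup_def)
  have "f [^]\<^bsub>BijGroup (Q n)\<^esub> (4::nat) = (\<lambda>x\<in>Q n. (f ^^ 4) x)" by (rule pow_Bij[OF fB])
  also have "\<dots> = (\<lambda>x\<in>Q n. x)" using f4 by (intro restrict_ext) simp
  also have "\<dots> = \<one>\<^bsub>BijGroup (Q n)\<^esub>" by (simp add: BijGroup_def)
  finally have "f [^]\<^bsub>BijGroup (Q n)\<^esub> (4::nat) = \<one>\<^bsub>BijGroup (Q n)\<^esub>" .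
  then have "group.ord (BijGroup (Q n)) f dvd 4"
    using group.pow_eq_id[OF group_BijGroup fc] by blast
  then show "group.ord (BijGroup (Q n)) f \<in> {1, 2, 4}" by (rule dvd4)
  show "\<forall>a \<in> Q n. (LEAST k::nat. 0 < k \<and> (f ^^ k) a = a) \<in> {1, 2, 4}"
  proof
    fix a assume a: "a \<in> Q n"
    define m where "m = (LEAST k::nat. 0 < k \<and> (f ^^ k) a = a)"
    have P4: "0 < (4::nat) \<and> (f ^^ 4) a = a" using f4[OF a] by simp
    have Pm: "0 < m \<and> (f ^^ m) a = a" unfolding m_def by (rule LeastI[where P="\<lambda>k. 0 < k \<and> (f ^^ k) a = a", OF P4])
    have m4: "m \<le> 4" unfolding m_def by (rule Least_le[where P="\<lambda>k. 0 < k \<and> (f ^^ k) a = a", OF P4])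
    have m3: "m \<noteq> 3"
    proof
      assume "m = 3"
      then have "(f ^^ 3) a = a" using Pm by simp
      then have "f a = a" using f4[OF a] by (simp add: numeral_eq_Suc)
      then have "0 < (1::nat) \<and> (f ^^ 1) a = a" by simp
      then have "m \<le> 1" unfolding m_def by (rule Least_le[where P="\<lambda>k. 0 < k \<and> (f ^^ k) a = a"])
      then show False using \<open>m = 3\<close> by simp
    qed
    have "m = 1 \<or> m = 2 \<or> m = 3 \<or> m = 4" using Pm m4 by arith
    then show "m \<in> {1, 2, 4}" using m3 by auto
  qed
qed

end
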